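(* For every partition $(P_H,P_L)$ of $E$ with $P_L\neq\emptyset$ we have $\sum_{e\in P_L}\mathrm{wt}_{P_L}(e)\le b$. If moreover $0<\epsilon<1$, $\bar b,\bar w$ satisfy $b/2\le\bar b\le 2b$ and $w/6\le\bar w\le 6w$, and $(P_H,P_L)$ is appropriate with respect to $\bar b,\bar w,\epsilon$, then $$b(1-c_H\epsilon)\le \sum_{e\in P_L}\mathrm{wt}_{P_L}(e)\le b,$$ where $c_H=1.77\times 10^4$.
   Context: Let $G=(V,E)$ be a bipartite graph with bipartition $V=U\cup L$; $d_v$ is the degree of $v$; for $e=(u,v)$, $d_e=d_u+d_v-2$; $w$ is the number of wedges (paths with two edges). A butterfly is a set of four distinct vertices $\{u_1,u_2,v_1,v_2\}$, $u_i\in U$, $v_i\in L$, with all four pairs $u_iv_j$ edges (its four edges); $b$ is the number of butterflies and $b(e)$ the number containing edge $e$. Given a nonempty $P_L\subseteq E$: for a butterfly $B$, $\mathrm{wt}_{P_L}(B)=0$ if none of its edges lies in $P_L$, and $\mathrm{wt}_{P_L}(B)=1/\ell$ if exactly $\ell>0$ of its edges lie in $P_L$; for an edge $e$, $\mathrm{wt}_{P_L}(e)=0$ if $e\notin P_L$ and $\mathrm{wt}_{P_L}(e)=\sum_{B\ni e}\mathrm{wt}_{P_L}(B)$ (sum over butterflies containing $e$) if $e\in P_L$. Given $\bar b,\bar w,\epsilon$, an edge $e$ is heavy if $b(e)>2\bar b^{3/4}/\epsilon^{1/4}$ or $d_e>\bar w/(\epsilon\bar b)^{1/4}$, and light if $b(e)<\bar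 b^{3/4}/(2\epsilon^{1/4})$ and $d_e<\bar w/(\epsilon\bar b)^{1/4}$. A partition $(P_H,P_L)$ of $E$ is appropriate if every heavy edge is in $P_H$ and every light edge is in $P_L$. *)

theory Defs
  imports Complex_Main
begin

definition bip_graph :: "'a set \<Rightarrow> 'a set \<Rightarrow> ('a \<times> 'a) set \<Rightarrow> bool" where
  "bip_graph U L E \<longleftrightarrow> finite U \<and> finite L \<and> U \<inter> L = {} \<and> E \<subseteq> U \<times> L"

definition vdeg :: "('a \<times> 'a) set \<Rightarrow> 'a \<Rightarrow> nat" where
  "vdeg E x = card {e \<in> E. fst e = x \<or> snd e = x}"

definition edeg :: "('a \<times> 'a) set \<Rightarrow> 'a \<times> 'a \<Rightarrow> real" where
  "edeg E e = real (vdeg E (fst e)) + real (vdeg E (snd e)) - 2"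

definition wedges :: "('a \<times> 'a) set \<Rightarrow> ('a \<times> 'a) set set" where
  "wedges E = {{e1, e2} | e1 e2. e1 \<in> E \<and> e2 \<in> E \<and> e1 \<noteq> e2 \<and>
                 (fst e1 = fst e2 \<or> snd e1 = snd e2)}"

definition num_wedges :: "('a \<times> 'a) set \<Rightarrow> nat" where
  "num_wedges E = card (wedges E)"

definition butterflies :: "'a set \<Rightarrow> 'a set \<Rightarrow> ('a \<times> 'a) set \<Rightarrow> 'a set set" where
  "butterflies U L E = {{u1, u2, v1, v2} | u1 u2 v1 v2.
      u1 \<in> U \<and> u2 \<in> U \<and> v1 \<in> L \<and> v2 \<in> L \<and> u1 \<noteq> u2 \<and> v1 \<noteq> v2 \<and>
      (u1, v1) \<in> E \<and> (u1, v2) \<in> E \<and> (u2, v1) \<in> E \<and> (u2, v2) \<in> E}"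

definition bfly_edges :: "'a set \<Rightarrow> 'a set \<Rightarrow> 'a set \<Rightarrow> ('a \<times> 'a) set" where
  "bfly_edges U L B = {(u, v). u \<in> B \<inter> U \<and> v \<in> B \<inter> L}"

definition num_bfly :: "'a set \<Rightarrow> 'a set \<Rightarrow> ('a \<times> 'a) set \<Rightarrow> nat" where
  "num_bfly U L E = card (butterflies U L E)"

definition edge_bfly :: "'a set \<Rightarrow> 'a set \<Rightarrow> ('a \<times> 'a) set \<Rightarrow> 'a \<times> 'a \<Rightarrow> nat" where
  "edge_bfly U L E e = card {B \<in> butterflies U L E. e \<in> bfly_edges U L B}"

definition wt_bfly :: "'a set \<Rightarrow> 'a set \<Rightarrow> ('a \<times> 'a) set \<Rightarrow> 'a set \<Rightarrow> real" where
  "wt_bfly U L P B = (let l = card (bfly_edges U L B \<inter> P) in if l = 0 then 0 else 1 / real l)"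

definition wt_edge :: "'a set \<Rightarrow> 'a set \<Rightarrow> ('a \<times> 'a) set \<Rightarrow> ('a \<times> 'a) set \<Rightarrow> 'a \<times> 'a \<Rightarrow> real" where
  "wt_edge U L E P e = (if e \<notin> P then 0 else
      (\<Sum>B \<in> {B \<in> butterflies U L E. e \<in> bfly_edges U L B}. wt_bfly U L P B))"

definition heavy :: "'a set \<Rightarrow> 'a set \<Rightarrow> ('a \<times> 'a) set \<Rightarrow> real \<Rightarrow> real \<Rightarrow> real \<Rightarrow> 'a \<times> 'a \<Rightarrow> bool" where
  "heavy U L E bb wb eps e \<longleftrightarrow>
     real (edge_bfly U L E e) > 2 * bb powr (3/4) / eps powr (1/4) \<or>
     edeg E e > wb / (eps * bb) powr (1/4)"

definition light :: "'a set \<Rightarrow> 'a set \<Rightarrow> ('a \<times> 'a) set \<Rightarrow> real \<Rightarrow> real \<Rightarrow> real \<Rightarrow> 'a \<times> 'a \<Rightarrow> bool" where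
  "light U L E bb wb eps e \<longleftrightarrow>
     real (edge_bfly U L E e) < bb powr (3/4) / (2 * eps powr (1/4)) \<and>
     edeg E e < wb / (eps * bb) powr (1/4)"

definition appropriate :: "'a set \<Rightarrow> 'a set \<Rightarrow> ('a \<times> 'a) set \<Rightarrow> real \<Rightarrow> real \<Rightarrow> real \<Rightarrow>
    ('a \<times> 'a) set \<Rightarrow> ('a \<times> 'a) set \<Rightarrow> bool" where
  "appropriate U L E bb wb eps PH PL \<longleftrightarrow>
     PH \<union> PL = E \<and> PH \<inter> PL = {} \<and>
     (\<forall>e \<in> E. heavy U L E bb wb eps e \<longrightarrow> e \<in> PH) \<and>
     (\<forall>e \<in> E. light U L E bb wb eps e \<longrightarrow> e \<in> PL)"

end

theory Submission
  imports Defs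
begin


lemma bip_fin:
  assumes "bip_graph U L E"
  shows "finite E" "finite (butterflies U L E)"
proof -
  show "finite E" using assms unfolding bip_graph_def by (meson finite_SigmaI finite_subset)
  have "butterflies U L E \<subseteq> Pow (U \<union> L)" unfolding butterflies_def by auto
  then show "finite (butterflies U L E)" using assms unfolding bip_graph_def
    by (meson finite_Pow_iff finite_UnI finite_subset)
qed

lemma bfly_struct:
  assumes "bip_graph U L E" "B \<in> butterflies U L E"
  shows "\<exists>u1 u2 v1 v2. u1 \<in> U \<and> u2 \<in> U \<and> v1 \<in> L \<and> v2 \<in> L \<and> u1 \<noteq> u2 \<and> v1 \<noteq> v2 \<and>
      (u1, v1) \<in> E \<and> (u1, v2) \<in> E \<and> (u2, v1) \<in> E \<and> (u2, v2) \<in> E \<and> B = {u1,u2,v1,v2} \<and>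
      bfly_edges U L B = {(u1,v1),(u1,v2),(u2,v1),(u2,v2)}"
proof -
  obtain u1 u2 v1 v2 where h: "u1 \<in> U \<and> u2 \<in> U \<and> v1 \<in> L \<and> v2 \<in> L \<and> u1 \<noteq> u2 \<and> v1 \<noteq> v2 \<and>
      (u1, v1) \<in> E \<and> (u1, v2) \<in> E \<and> (u2, v1) \<in> E \<and> (u2, v2) \<in> E" and B: "B = {u1,u2,v1,v2}"
    using assms(2) unfolding butterflies_def by blast
  have d: "U \<inter> L = {}" using assms(1) unfolding bip_graph_def by auto
  have "B \<inter> U = {u1,u2}" "B \<inter> L = {v1,v2}" using h d B by auto
  then have "bfly_edges U L B = {(u1,v1),(u1,v2),(u2,v1),(u2,v2)}"
    unfolding bfly_edges_def by auto
  then show ?thesis using h B by blast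
qed

lemma bfly_edges_card:
  assumes "bip_graph U L E" "B \<in> butterflies U L E"
  shows "card (bfly_edges U L B) = 4" "bfly_edges U L B \<subseteq> E" "finite (bfly_edges U L B)"
proof -
  obtain u1 u2 v1 v2 where h: "u1 \<in> U \<and> u2 \<in> U \<and> v1 \<in> L \<and> v2 \<in> L \<and> u1 \<noteq> u2 \<and> v1 \<noteq> v2 \<and>
      (u1, v1) \<in> E \<and> (u1, v2) \<in> E \<and> (u2, v1) \<in> E \<and> (u2, v2) \<in> E \<and> B = {u1,u2,v1,v2} \<and>
      bfly_edges U L B = {(u1,v1),(u1,v2),(u2,v1),(u2,v2)}"
    using bfly_struct[OF assms] by blast
  then show "card (bfly_edges U L B) = 4" "bfly_edges U L B \<subseteq> E" "finite (bfly_edges U L B)"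
    by auto
qed

lemma sum_wt:
  assumes "bip_graph U L E" "PL \<subseteq> E"
  shows "(\<Sum>e \<in> PL. wt_edge U L E PL e) =
     real (card {B \<in> butterflies U L E. bfly_edges U L B \<inter> PL \<noteq> {}})"
proof -
  let ?Bf = "butterflies U L E"
  have fE: "finite PL" using bip_fin(1)[OF assms(1)] assms(2) finite_subset by blast
  have fB: "finite ?Bf" using bip_fin(2)[OF assms(1)] .
  have "(\<Sum>e \<in> PL. wt_edge U L E PL e) = (\<Sum>e \<in> PL. \<Sum>B \<in> {B \<in> ?Bf. e \<in> bfly_edges U L B}. wt_bfly U L PL B)"
    unfolding wt_edge_def by (rule sum.cong) auto
  also have "\<dots> = (\<Sum>B \<in> ?Bf. \<Sum>e \<in> {e \<in> PL. e \<in> bfly_edges U L B}. wt_bfly U L PL B)"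
    by (rule sum.swap_restrict[OF fE fB])
  also have "\<dots> = (\<Sum>B \<in> ?Bf. (if bfly_edges U L B \<inter> PL \<noteq> {} then 1 else 0))"
  proof (rule sum.cong)
    fix B assume B: "B \<in> ?Bf"
    have fin: "finite (bfly_edges U L B \<inter> PL)" using bfly_edges_card(3)[OF assms(1) B] by simp
    have eq: "{e \<in> PL. e \<in> bfly_edges U L B} = bfly_edges U L B \<inter> PL" by auto
    show "(\<Sum>e \<in> {e \<in> PL. e \<in> bfly_edges U L B}. wt_bfly U L PL B) = (if bfly_edges U L B \<inter> PL \<noteq> {} then 1 else 0)"
      unfolding eq using fin by (simp add: wt_bfly_def Let_def)
  qed simp
  also have "\<dots> = real (card {B \<in> ?Bf. bfly_edges U L B \<inter> PL \<noteq> {}})"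
    using fB by (simp add: sum.If_cases Int_def)
  finally show ?thesis .
qed




lemma sum_edge_bfly:
  assumes "bip_graph U L E"
  shows "(\<Sum>e \<in> E. real (edge_bfly U L E e)) = 4 * real (num_bfly U L E)"
proof -
  let ?Bf = "butterflies U L E"
  have fE: "finite E" and fB: "finite ?Bf" using bip_fin[OF assms] by auto
  have "(\<Sum>e \<in> E. real (edge_bfly U L E e)) = (\<Sum>e \<in> E. \<Sum>B \<in> {B \<in> ?Bf. e \<in> bfly_edges U L B}. (1::real))"
    unfolding edge_bfly_def by simp
  also have "\<dots> = (\<Sum>B \<in> ?Bf. \<Sum>e \<in> {e \<in> E. e \<in> bfly_edges U L B}. (1::real))"
    by (rule sum.swap_restrict[OF fE fB])
  also have "\<dots> = (\<Sum>B \<in> ?Bf. (4::real))"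
  proof (rule sum.cong)
    fix B assume B: "B \<in> ?Bf"
    have eq: "{e \<in> E. e \<in> bfly_edges U L B} = bfly_edges U L B"
      using bfly_edges_card(2)[OF assms B] by auto
    show "(\<Sum>e \<in> {e \<in> E. e \<in> bfly_edges U L B}. (1::real)) = 4"
      unfolding eq using bfly_edges_card(1)[OF assms B] by simp
  qed simp
  finally show ?thesis unfolding num_bfly_def by simp
qed

definition wpairs :: "('a \<times> 'a) set \<Rightarrow> (('a \<times> 'a) \<times> ('a \<times> 'a)) set" where
  "wpairs E = {(e,f). e \<in> E \<and> f \<in> E \<and> e \<noteq> f \<and> (fst e = fst f \<or> snd e = snd f)}"

lemma wpairs_card:
  assumes "finite E"
  shows "card (wpairs E) \<le> 2 * num_wedges E"
proof -
  let ?g = "\<lambda>p. {fst p, snd p}"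
  have "wpairs E \<subseteq> E \<times> E" unfolding wpairs_def by auto
  then have fP: "finite (wpairs E)" using assms by (meson finite_SigmaI finite_subset)
  have im: "?g ` wpairs E = wedges E"
  proof
    show "?g ` wpairs E \<subseteq> wedges E"
    proof
      fix y assume "y \<in> ?g ` wpairs E"
      then obtain p where p: "p \<in> wpairs E" "y = {fst p, snd p}" by blast
      obtain e f where "p = (e,f)" by (cases p)
      then have ef: "(e,f) \<in> wpairs E" "y = {e,f}" using p by auto
      then have P: "e \<in> E \<and> f \<in> E \<and> e \<noteq> f \<and> (fst e = fst f \<or> snd e = snd f)"
        unfolding wpairs_def by simp
      have "\<exists>e1 e2. y = {e1,e2} \<and> e1 \<in> E \<and> e2 \<in> E \<and> e1 \<noteq> e2 \<and> (fst e1 = fst e2 \<or> snd e1 = snd e2)"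
        using P ef(2) by blast
      then show "y \<in> wedges E" unfolding wedges_def by simp
    qed
    show "wedges E \<subseteq> ?g ` wpairs E"
    proof
      fix y assume "y \<in> wedges E"
      then obtain e f where "e \<in> E \<and> f \<in> E \<and> e \<noteq> f \<and> (fst e = fst f \<or> snd e = snd f)" "y = {e,f}"
        unfolding wedges_def by blast
      then have m: "(e,f) \<in> wpairs E" and yy: "y = {e,f}" unfolding wpairs_def by auto
      have "y = ?g (e,f)" using yy by simp
      from this m show "y \<in> ?g ` wpairs E" by (rule image_eqI)
    qed
  qed
  have "real (card (wpairs E)) = (\<Sum>p \<in> wpairs E. (1::real))" by simp
  also have "\<dots> = (\<Sum>y \<in> ?g ` wpairs E. \<Sum>p \<in> {x \<in> wpairs E. ?g x = y}. (1::real))"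
    by (rule sum.image_gen[OF fP])
  also have "\<dots> \<le> (\<Sum>y \<in> ?g ` wpairs E. (2::real))"
  proof (rule sum_mono)
    fix y assume "y \<in> ?g ` wpairs E"
    then obtain p where p: "p \<in> wpairs E" "y = {fst p, snd p}" by blast
      obtain e f where "p = (e,f)" by (cases p)
      then have ef: "(e,f) \<in> wpairs E" "y = {e,f}" using p by auto
    have "{x \<in> wpairs E. ?g x = y} \<subseteq> {(e,f),(f,e)}"
    proof
      fix x assume "x \<in> {x \<in> wpairs E. ?g x = y}"
      then have "{fst x, snd x} = {e,f}" using ef by simp
      then have "x = (e,f) \<or> x = (f,e)" by (cases x) (auto simp: doubleton_eq_iff)
      then show "x \<in> {(e,f),(f,e)}" by blast
    qed
    then have "card {x \<in> wpairs E. ?g x = y} \<le> card {(e,f),(f,e)}"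
      by (intro card_mono) auto
    also have "\<dots> \<le> 2" by (rule card_insert_le_m1) simp_all
    finally show "(\<Sum>p \<in> {x \<in> wpairs E. ?g x = y}. (1::real)) \<le> 2" by simp
  qed
  also have "\<dots> = 2 * real (num_wedges E)" unfolding im num_wedges_def by simp
  finally show ?thesis by linarith
qed

lemma vdeg_fst:
  assumes "bip_graph U L E" "u \<in> U"
  shows "vdeg E u = card {f \<in> E. fst f = u}"
proof -
  have "{e \<in> E. fst e = u \<or> snd e = u} = {f \<in> E. fst f = u}"
    using assms unfolding bip_graph_def by auto
  then show ?thesis unfolding vdeg_def by simp
qed

lemma vdeg_snd:
  assumes "bip_graph U L E" "v \<in> L"
  shows "vdeg E v = card {f \<in> E. snd f = v}"
proof -
  have "{e \<in> E. fst e = v \<or> snd e = v} = {f \<in> E. snd f = v}"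
    using assms unfolding bip_graph_def by auto
  then show ?thesis unfolding vdeg_def by simp
qed

lemma edeg_eq:
  assumes "bip_graph U L E" "e \<in> E"
  shows "edeg E e = real (card {f. (e,f) \<in> wpairs E})"
proof -
  obtain u v where e: "e = (u,v)" "u \<in> U" "v \<in> L" using assms unfolding bip_graph_def by auto
  have fE: "finite E" using bip_fin[OF assms(1)] by auto
  let ?A = "{f \<in> E. fst f = u}" and ?B = "{f \<in> E. snd f = v}"
  have fA: "finite ?A" "finite ?B" using fE by auto
  have "{f. (e,f) \<in> wpairs E} = (?A - {e}) \<union> (?B - {e})"
    using assms(2) e unfolding wpairs_def by auto
  moreover have "(?A - {e}) \<inter> (?B - {e}) = {}" using e by auto
  ultimately have "card {f. (e,f) \<in> wpairs E} = card (?A - {e}) + card (?B - {e})"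
    using fA by (simp add: card_Un_disjoint)
  moreover have "card (?A - {e}) = card ?A - 1" "card (?B - {e}) = card ?B - 1"
    using assms(2) e fA by (auto simp: card_Diff_singleton)
  moreover have "card ?A \<ge> 1" "card ?B \<ge> 1"
    using assms(2) e fA by (auto simp: Suc_le_eq card_gt_0_iff)
  ultimately show ?thesis unfolding edeg_def using vdeg_fst[OF assms(1) e(2)] vdeg_snd[OF assms(1) e(3)] e(1)
    by simp
qed

lemma sum_edeg:
  assumes "bip_graph U L E"
  shows "(\<Sum>e \<in> E. edeg E e) \<le> 2 * real (num_wedges E)"
proof -
  have fE: "finite E" using bip_fin[OF assms] by auto
  have "(\<Sum>e \<in> E. edeg E e) = (\<Sum>e \<in> E. real (card {f. (e,f) \<in> wpairs E}))"
    using edeg_eq[OF assms] by simp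
  also have "\<dots> = real (card (SIGMA e:E. {f. (e,f) \<in> wpairs E}))"
  proof -
    have "\<forall>e\<in>E. finite {f. (e,f) \<in> wpairs E}" using fE unfolding wpairs_def by auto
    then show ?thesis using fE by (simp add: card_SigmaI)
  qed
  also have "(SIGMA e:E. {f. (e,f) \<in> wpairs E}) = wpairs E" unfolding wpairs_def by auto
  finally show ?thesis using wpairs_card[OF fE] by linarith
qed



lemma pw4: "(x::real) > 0 \<Longrightarrow> (x powr (1/4))^4 = x"
  by (simp add: powr_power)
lemma pw3: "(x::real) > 0 \<Longrightarrow> x powr (3/4) = (x powr (1/4))^3"
  by (simp add: powr_power)

lemma arith_key:
  fixes b w bb wb eps h1 h2 k bad :: real
  assumes b1: "b \<ge> 1" and w0: "w > 0" and e0: "eps > 0" and bb1: "b/2 \<le> bb" and bb2: "bb \<le> 2*b"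
    and wb1: "w/6 \<le> wb"
    and H1: "h1 * (bb powr (3/4) / (2 * eps powr (1/4))) \<le> 4*b"
    and H2: "h2 * (wb / (eps*bb) powr (1/4)) \<le> 2*w"
    and k1: "k \<le> h1 + h2" and k4: "4 \<le> k" and bd: "bad \<le> k*(k-1)/2"
  shows "bad \<le> 17700*eps*b"
proof -
  define e4 where "e4 = eps powr (1/4)"
  define a where "a = bb powr (1/4)"
  define t where "t = b powr (1/4)"
  define r where "r = (2::real) powr (1/4)"
  have bbp: "bb > 0" using b1 bb1 by linarith
  have wbp: "wb > 0" using w0 wb1 by linarith
  have e4p: "e4 > 0" and e44: "e4^4 = eps" using e0 pw4 unfolding e4_def by auto
  have ap: "a > 0" and a4: "a^4 = bb" using bbp pw4 unfolding a_def by auto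
  have tp: "t > 0" and t4: "t^4 = b" using b1 pw4 unfolding t_def by auto
  have rp: "r > 0" and r4: "r^4 = 2" using pw4 unfolding r_def by auto
  have a3: "bb powr (3/4) = a^3" unfolding a_def using pw3 bbp by simp
  have ea: "(eps*bb) powr (1/4) = e4 * a" unfolding e4_def a_def using e0 bbp by (simp add: powr_mult)
  have "(b/2) powr (1/4) \<le> a" unfolding a_def using bb1 b1 by (intro powr_mono2) auto
  moreover have "(b/2) powr (1/4) = t / r" unfolding t_def r_def using b1 by (simp add: powr_divide)
  ultimately have at: "t \<le> r * a" using rp by (simp add: divide_le_eq mult.commute)
  have "a \<le> (2*b) powr (1/4)" unfolding a_def using bb2 bbp by (intro powr_mono2) auto
  moreover have "(2*b) powr (1/4) = r * t" unfolding t_def r_def using b1 by (simp add: powr_mult)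
  ultimately have ar: "a \<le> r * t" by simp
  have r119: "r \<le> 1.19"
  proof (rule ccontr)
    assume "\<not> r \<le> 1.19"
    then have "1.19^4 \<le> r^4" by (intro power_mono) auto
    then show False using r4 by (simp add: power_divide)
  qed
  have h1b: "h1 \<le> 8 * r^3 * e4 * t"
  proof -
    have "h1 * a^3 \<le> 8 * b * e4" using H1 a3 e4p unfolding e4_def[symmetric]
      by (simp add: field_simps)
    then have A: "h1 \<le> 8 * b * e4 / a^3" using ap by (simp add: pos_le_divide_eq)
    have "t^3 \<le> (r*a)^3" using at tp by (intro power_mono) auto
    then have tr: "t^3 / r^3 \<le> a^3" using rp by (simp add: divide_le_eq power_mult_distrib mult.commute)
    have "8 * b * e4 / a^3 \<le> 8 * b * e4 / (t^3 / r^3)"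
      using tr tp rp b1 e4p ap by (intro divide_left_mono) auto
    also have "\<dots> = 8 * r^3 * e4 * t" using tp rp t4[symmetric] by (simp add: field_simps power_numeral_reduce)
    finally show ?thesis using A by linarith
  qed
  have h2b: "h2 \<le> 12 * r * e4 * t"
  proof -
    have "h2 * wb \<le> 2 * w * e4 * a" using H2 ea ap e4p by (simp add: field_simps)
    then have A: "h2 \<le> 2 * w * e4 * a / wb" using wbp by (simp add: pos_le_divide_eq)
    have "2 * w * e4 * a / wb \<le> 2 * w * e4 * a / (w/6)"
      using wbp wb1 w0 e4p ap by (intro divide_left_mono) auto
    also have "\<dots> = 12 * e4 * a" using w0 by (simp add: field_simps)
    also have "\<dots> \<le> 12 * e4 * (r * t)" using ar e4p by simp
    finally show ?thesis using A by (simp add: algebra_simps)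
  qed
  have "r^3 \<le> 1.19^3" using r119 rp by (intro power_mono) auto
  then have "8 * r^3 + 12 * r \<le> 27.8" using r119 by (simp add: power_divide)
  then have "(8 * r^3 + 12 * r) * (e4 * t) \<le> 27.8 * (e4 * t)" using e4p tp by (intro mult_right_mono) auto
  then have kb: "k \<le> 27.8 * e4 * t" using k1 h1b h2b by (simp add: algebra_simps)
  have "k^4 \<le> (27.8 * e4 * t)^4" using kb k4 by (intro power_mono) auto
  also have "\<dots> = 27.8^4 * e4^4 * t^4" by (simp only: power_mult_distrib)
  also have "\<dots> = 27.8^4 * eps * b" using e44 t4 by simp
  finally have k44: "k^4 \<le> 27.8^4 * eps * b" .
  have "k*k \<ge> 4*4" using k4 by (intro mult_mono) auto
  then have "3*k^2+12*k-16 \<ge> 0" using k4 by (simp add: power2_eq_square)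
  then have "(k-4)*(3*k^2+12*k-16) \<ge> 0" using k4 by (intro mult_nonneg_nonneg) auto
  then have "k * ((k-4)*(3*k^2+12*k-16)) \<ge> 0" using k4 by simp
  then have kk: "k*(k-1)/2 \<le> 3 * k^4 / 128" by (simp add: algebra_simps power_numeral_reduce)
  have "3 * k^4 / 128 \<le> 3 * (27.8^4 * eps * b) / 128" using k44 by simp
  also have "\<dots> \<le> 17700 * eps * b" using e0 b1 by (simp add: power_divide)
  finally show ?thesis using bd kk by linarith
qed



lemma choose2_real: "real (n choose 2) = real n * (real n - 1) / 2"
proof (cases n)
  case 0 then show ?thesis by simp
next
  case (Suc m)
  have "real (n - 1) * n / 2 = of_nat (n choose 2)"
    by (auto simp add: choose_two field_char_0_class.of_nat_div mod_eq_0_iff_dvd)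
  then show ?thesis using Suc by (simp add: of_nat_diff algebra_simps)
qed

lemma bad_bound:
  assumes G: "bip_graph U L E" and P1: "PH \<union> PL = E" and P2: "PH \<inter> PL = {}"
    and e0: "0 < eps" and bb1: "real (num_bfly U L E)/2 \<le> bb" and bb2: "bb \<le> 2*real (num_bfly U L E)"
    and wb1: "real (num_wedges E)/6 \<le> wb" and apr: "appropriate U L E bb wb eps PH PL"
  shows "real (card {B \<in> butterflies U L E. bfly_edges U L B \<inter> PL = {}}) \<le> 17700*eps*real (num_bfly U L E)"
proof (cases "{B \<in> butterflies U L E. bfly_edges U L B \<inter> PL = {}} = {}")
  case True show ?thesis unfolding True using e0 by simp
next
  case False
  let ?Bf = "butterflies U L E"
  let ?Bad = "{B \<in> butterflies U L E. bfly_edges U L B \<inter> PL = {}}"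
  define K where "K = {e\<in>E. \<not> light U L E bb wb eps e}"
  define H1 where "H1 = {e\<in>E. real (edge_bfly U L E e) \<ge> bb powr (3/4) / (2 * eps powr (1/4))}"
  define H2 where "H2 = {e\<in>E. edeg E e \<ge> wb / (eps*bb) powr (1/4)}"
  have fE: "finite E" and fB: "finite ?Bf" using bip_fin[OF G] by auto
  obtain B0 where B0: "B0 \<in> ?Bad" using False by blast
  have badK: "bfly_edges U L B \<subseteq> K" if B: "B \<in> ?Bad" for B
  proof
    fix e assume e: "e \<in> bfly_edges U L B"
    have eE: "e \<in> E" using bfly_edges_card(2)[OF G] B e by auto
    have "e \<notin> PL" using B e by auto
    then have "\<not> light U L E bb wb eps e" using apr eE unfolding appropriate_def by auto
    then show "e \<in> K" using eE K_def by auto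
  qed
  have fK: "finite K" using fE K_def by auto
  have "card (bfly_edges U L B0) \<le> card K" using badK[OF B0] fK by (intro card_mono)
  then have k4: "4 \<le> card K" using bfly_edges_card(1)[OF G] B0 by auto
  define g where "g = (\<lambda>S::('a\<times>'a) set. fst ` S \<union> snd ` S)"
  have sub: "?Bad \<subseteq> g ` {S. S \<subseteq> K \<and> card S = 2}"
  proof
    fix B assume B: "B \<in> ?Bad"
    then have BB: "B \<in> ?Bf" by simp
    obtain u1 u2 v1 v2 where h: "u1 \<in> U \<and> u2 \<in> U \<and> v1 \<in> L \<and> v2 \<in> L \<and> u1 \<noteq> u2 \<and> v1 \<noteq> v2 \<and>
      (u1, v1) \<in> E \<and> (u1, v2) \<in> E \<and> (u2, v1) \<in> E \<and> (u2, v2) \<in> E \<and> B = {u1,u2,v1,v2} \<and>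
      bfly_edges U L B = {(u1,v1),(u1,v2),(u2,v1),(u2,v2)}"
      using bfly_struct[OF G BB] by blast
    let ?S = "{(u1,v1),(u2,v2)}"
    have "?S \<subseteq> bfly_edges U L B" using h by auto
    then have "?S \<subseteq> K" using badK[OF B] by auto
    moreover have "card ?S = 2" using h by auto
    ultimately have m: "?S \<in> {S. S \<subseteq> K \<and> card S = 2}" by simp
    have "B = g ?S" using h unfolding g_def by auto
    from this m show "B \<in> g ` {S. S \<subseteq> K \<and> card S = 2}" by (rule image_eqI)
  qed
  have fS: "finite {S. S \<subseteq> K \<and> card S = 2}" using fK by simp
  have "card ?Bad \<le> card (g ` {S. S \<subseteq> K \<and> card S = 2})"
    using sub fS by (intro card_mono) auto
  also have "\<dots> \<le> card {S. S \<subseteq> K \<and> card S = 2}" by (rule card_image_le[OF fS])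
  also have "\<dots> = card K choose 2" by (rule n_subsets[OF fK])
  finally have cb: "real (card ?Bad) \<le> real (card K) * (real (card K) - 1) / 2"
    unfolding choose2_real[symmetric] by linarith
  have KH: "K \<subseteq> H1 \<union> H2" unfolding K_def H1_def H2_def light_def by (auto simp: not_less)
  have fH: "finite H1" "finite H2" using fE H1_def H2_def by auto
  have "card K \<le> card (H1 \<union> H2)" using KH fH by (intro card_mono) auto
  also have "\<dots> \<le> card H1 + card H2" by (rule card_Un_le)
  finally have kH: "real (card K) \<le> real (card H1) + real (card H2)" by linarith
  have B0f: "B0 \<in> ?Bf" using B0 by simp
  have b1: "real (num_bfly U L E) \<ge> 1"
  proof -
    have "card ?Bf > 0" using B0f fB card_gt_0_iff by blast
    then show ?thesis unfolding num_bfly_def by simp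
  qed
  have w0: "real (num_wedges E) > 0"
  proof -
    obtain u1 u2 v1 v2 where h: "u1 \<in> U \<and> u2 \<in> U \<and> v1 \<in> L \<and> v2 \<in> L \<and> u1 \<noteq> u2 \<and> v1 \<noteq> v2 \<and>
      (u1, v1) \<in> E \<and> (u1, v2) \<in> E \<and> (u2, v1) \<in> E \<and> (u2, v2) \<in> E"
      using bfly_struct[OF G B0f] by blast
    have "\<exists>e1 e2. {(u1,v1),(u1,v2)} = {e1,e2} \<and> e1 \<in> E \<and> e2 \<in> E \<and> e1 \<noteq> e2 \<and> (fst e1 = fst e2 \<or> snd e1 = snd e2)"
      using h by (intro exI[of _ "(u1,v1)"] exI[of _ "(u1,v2)"]) simp
    then have mem: "{(u1,v1),(u1,v2)} \<in> wedges E" unfolding wedges_def by simp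
    have "wedges E \<subseteq> Pow E" unfolding wedges_def by auto
    then have "finite (wedges E)" using fE finite_subset by blast
    then have "card (wedges E) > 0" using mem card_gt_0_iff by blast
    then show ?thesis unfolding num_wedges_def by simp
  qed
  have h1: "real (card H1) * (bb powr (3/4) / (2 * eps powr (1/4))) \<le> 4 * real (num_bfly U L E)"
  proof -
    have "real (card H1) * (bb powr (3/4) / (2 * eps powr (1/4))) \<le> (\<Sum>e\<in>H1. real (edge_bfly U L E e))"
      by (rule sum_bounded_below) (simp add: H1_def)
    also have "\<dots> \<le> (\<Sum>e\<in>E. real (edge_bfly U L E e))"
      using fE by (intro sum_mono2) (auto simp: H1_def)
    also have "\<dots> = 4 * real (num_bfly U L E)" by (rule sum_edge_bfly[OF G])
    finally show ?thesis .
  qed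
  have h2: "real (card H2) * (wb / (eps*bb) powr (1/4)) \<le> 2 * real (num_wedges E)"
  proof -
    have "real (card H2) * (wb / (eps*bb) powr (1/4)) \<le> (\<Sum>e\<in>H2. edeg E e)"
      by (rule sum_bounded_below) (simp add: H2_def)
    also have "\<dots> \<le> (\<Sum>e\<in>E. edeg E e)"
      using fE edeg_eq[OF G] by (intro sum_mono2) (auto simp: H2_def)
    also have "\<dots> \<le> 2 * real (num_wedges E)" by (rule sum_edeg[OF G])
    finally show ?thesis .
  qed
  show ?thesis
    by (rule arith_key[OF b1 w0 e0 bb1 bb2 wb1 h1 h2 kH _ cb]) (use k4 in simp)
qed

theorem lemma10:
  fixes U L :: "'a set" and E PH PL :: "('a \<times> 'a) set"
  assumes "bip_graph U L E"
    and "PH \<union> PL = E" and "PH \<inter> PL = {}" and "PL \<noteq> {}"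
  shows "(\<Sum>e \<in> PL. wt_edge U L E PL e) \<le> real (num_bfly U L E) \<and>
    (\<forall>bb wb eps :: real.
       0 < eps \<and> eps < 1 \<and>
       real (num_bfly U L E) / 2 \<le> bb \<and> bb \<le> 2 * real (num_bfly U L E) \<and>
       real (num_wedges E) / 6 \<le> wb \<and> wb \<le> 6 * real (num_wedges E) \<and>
       appropriate U L E bb wb eps PH PL \<longrightarrow>
       real (num_bfly U L E) * (1 - 17700 * eps) \<le> (\<Sum>e \<in> PL. wt_edge U L E PL e))"
proof -
  let ?Bf = "butterflies U L E"
  let ?Good = "{B \<in> ?Bf. bfly_edges U L B \<inter> PL \<noteq> {}}"
  let ?Bad = "{B \<in> ?Bf. bfly_edges U L B \<inter> PL = {}}"
  have PLE: "PL \<subseteq> E" using assms(2) by auto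
  have S: "(\<Sum>e \<in> PL. wt_edge U L E PL e) = real (card ?Good)" by (rule sum_wt[OF assms(1) PLE])
  have fB: "finite ?Bf" using bip_fin[OF assms(1)] by auto
  have "?Bf = ?Good \<union> ?Bad" by auto
  moreover have "?Good \<inter> ?Bad = {}" by auto
  ultimately have cs: "card ?Bf = card ?Good + card ?Bad" using fB by (metis (no_types, lifting) card_Un_disjoint finite_Un)
  show ?thesis
  proof (intro conjI allI impI)
    show "(\<Sum>e \<in> PL. wt_edge U L E PL e) \<le> real (num_bfly U L E)" using S cs unfolding num_bfly_def by simp
  next
    fix bb wb eps :: real
    assume H: "0 < eps \<and> eps < 1 \<and>
       real (num_bfly U L E) / 2 \<le> bb \<and> bb \<le> 2 * real (num_bfly U L E) \<and>
       real (num_wedges E) / 6 \<le> wb \<and> wb \<le> 6 * real (num_wedges E) \<and>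
       appropriate U L E bb wb eps PH PL"
    have "real (card ?Bad) \<le> 17700*eps*real (num_bfly U L E)"
      using bad_bound[OF assms(1) assms(2) assms(3)] H by blast
    then show "real (num_bfly U L E) * (1 - 17700 * eps) \<le> (\<Sum>e \<in> PL. wt_edge U L E PL e)"
      using S cs unfolding num_bfly_def by (simp add: algebra_simps)
  qed
qed

end
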